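(* Let $\textsc{mix}$ be a nice mixture with parameter space $\mathcal{W}\subset\mathbb{R}^m$ and constant $a>0$ (as in the context). Let $b>1$ and set the step size $\alpha = 2(1-b^{-1})/a$. Then for every $n\ge 1$, every sequence $x^n=x_1\dots x_n$ over $\mathcal{X}$, every sequence $\mathbf{P}^n=\mathbf{P}_1,\dots,\mathbf{P}_n$ of probability matrices over $\mathcal{P}_+$ and every initial weight vector $\mathbf{w}_1\in\mathcal{W}$, $$\ell(x^n,\textsc{mix-ogd}(\mathbf{w}_1,\alpha,x^n,\mathbf{P}^n)) \le b\cdot \ell^*(x^n,\mathbf{P}^n,\textsc{mix}) + \frac{a}{4}\,\frac{b^2}{b-1}\,\lvert \mathbf{w}_1-\mathbf{w}^*\rvert^2,$$ where $\mathbf{w}^*\in\mathcal{W}$ is a minimizer of $\mathbf{w}\mapsto \ell(x^n,\mathbf{P}^n,\mathbf{w},\textsc{mix})$ over $\mathcal{W}$.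
   Context: Let $\mathcal{X}=\{1,\dots,N\}$ with $1<N<\infty$, and let $\mathcal{P}_+$ be the set of probability distributions on $\mathcal{X}$ assigning positive probability to every letter. Fix $m>1$. A probability matrix over $\mathcal{P}_+$ is $\mathbf{P}=(\mathbf{p}(1)\ \cdots\ \mathbf{p}(N))$ where $p_1,\dots,p_m\in\mathcal{P}_+$ and $\mathbf{p}(x)=(p_1(x),\dots,p_m(x))^{\mathsf T}$. For $p\in\mathcal{P}_+$ and $x\in\mathcal{X}$, $\ell(x,p):=-\log_2 p(x)$. A mixture $\textsc{mix}$ with parameter space $\mathcal{W}\subseteq\mathbb{R}^m$ maps $(\mathbf{w},\mathbf{P})$ with $\mathbf{w}\in\mathcal{W}$ to a distribution $\textsc{mix}(\mathbf{w},\mathbf{P})\in\mathcal{P}_+$. It is called nice if: (1) $\mathcal{W}$ is a non-empty, compact, convex subset of $\mathbb{R}^m$; (2) $\mathbf{w}\mapsto\ell(x,\textsc{mix}(\mathbf{w},\mathbf{P}))$ is convex on $\mathcal{W}$ for all $\mathbf{P}$ over $\mathcal{P}_+$ and all $x\in\mathcal{X}$; (3) it is differentiable in $\mathbf{w}$ for all such $\mathbf{P},x$; (4) there is a constant $a>0$ with $\lvert\nabla_{\mathbf{w}}\ell(x,\textsc{mix}(\mathbf{w},\mathbf{P}))\rvert^2\le a\,\ell(x,\textsc{mix}(\mathbf{w},\mathbf{P}))$ for all $\mathbf{w}\in\mathcal{W}$, all $\mathbf{P}$ over $\mathcal{P}_+$ and all $x\in\mathcal{X}$ ($\lvert\cdot\rvert$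 is the Euclidean norm). Algorithm $\textsc{mix-ogd}(\mathbf{w}_1,\alpha,x^n,\mathbf{P}^n)$: given $\mathbf{w}_1\in\mathcal{W}$, for $k=1,\dots,n$ it codes $x_k$ with $\ell(x_k,\textsc{mix}(\mathbf{w}_k,\mathbf{P}_k))$ bits and sets $\mathbf{w}_{k+1}=\mathrm{proj}\big(\mathbf{w}_k-\alpha\nabla_{\mathbf{w}}\ell(x_k,\textsc{mix}(\mathbf{w},\mathbf{P}_k))|_{\mathbf{w}=\mathbf{w}_k};\mathcal{W}\big)$, where $\mathrm{proj}(\mathbf{v};\mathcal{W})=\arg\min_{\mathbf{w}\in\mathcal{W}}\lvert\mathbf{v}-\mathbf{w}\rvert^2$. Its total code length is $\ell(x^n,\textsc{mix-ogd}(\mathbf{w}_1,\alpha,x^n,\mathbf{P}^n)):=\sum_{k=1}^n\ell(x_k,\textsc{mix}(\mathbf{w}_k,\mathbf{P}_k))$. Also $\ell(x^n,\mathbf{P}^n,\mathbf{w},\textsc{mix}):=\sum_{k=1}^n\ell(x_k,\textsc{mix}(\mathbf{w},\mathbf{P}_k))$ and $\ell^*(x^n,\mathbf{P}^n,\textsc{mix}):=\min_{\mathbf{w}\in\mathcal{W}}\ell(x^n,\mathbf{P}^n,\mathbf{w},\textsc{mix})$. *)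

theory Defs
  imports "HOL-Analysis.Analysis"
begin

definition Pplus :: "nat \<Rightarrow> (nat \<Rightarrow> real) \<Rightarrow> bool" where
  "Pplus N p \<longleftrightarrow> (\<forall>x\<in>{1..N}. p x > 0) \<and> (\<Sum>x=1..N. p x) = 1"

text \<open>A probability matrix over P_+: one distribution p_i per model index i (the m rows).\<close>
definition prob_matrix :: "nat \<Rightarrow> ('m \<Rightarrow> nat \<Rightarrow> real) \<Rightarrow> bool" where
  "prob_matrix N P \<longleftrightarrow> (\<forall>i. Pplus N (P i))"

definition ell :: "nat \<Rightarrow> (nat \<Rightarrow> real) \<Rightarrow> real" where
  "ell x p = - log 2 (p x)"

definition grad :: "(real^'m \<Rightarrow> real) \<Rightarrow> real^'m \<Rightarrow> real^'m" where
  "grad f w = (THE g. (f has_derivative (\<lambda>h. g \<bullet> h)) (at w))"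

definition proj :: "real^'m \<Rightarrow> (real^'m) set \<Rightarrow> real^'m" where
  "proj v W = (SOME w. w \<in> W \<and> (\<forall>u\<in>W. (norm (v - w))\<^sup>2 \<le> (norm (v - u))\<^sup>2))"

definition nice_mixture ::
  "nat \<Rightarrow> (real^'m) set \<Rightarrow> (real^'m \<Rightarrow> ('m \<Rightarrow> nat \<Rightarrow> real) \<Rightarrow> (nat \<Rightarrow> real)) \<Rightarrow> real \<Rightarrow> bool" where
  "nice_mixture N W mix a \<longleftrightarrow>
     W \<noteq> {} \<and> compact W \<and> convex W \<and> a > 0 \<and>
     (\<forall>P. prob_matrix N P \<longrightarrow>
        (\<forall>w\<in>W. Pplus N (mix w P)) \<and>
        (\<forall>x\<in>{1..N}.
           convex_on W (\<lambda>w. ell x (mix w P)) \<and>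
           (\<forall>w\<in>W. (\<lambda>w. ell x (mix w P)) differentiable (at w)) \<and>
           (\<forall>w\<in>W. (norm (grad (\<lambda>w. ell x (mix w P)) w))\<^sup>2 \<le> a * ell x (mix w P))))"

text \<open>ogd_w ... k is the weight vector w_{k+1} (so ogd_w ... 0 = w_1).\<close>
primrec ogd_w ::
  "(real^'m) set \<Rightarrow> (real^'m \<Rightarrow> ('m \<Rightarrow> nat \<Rightarrow> real) \<Rightarrow> (nat \<Rightarrow> real)) \<Rightarrow> real^'m \<Rightarrow> real
   \<Rightarrow> (nat \<Rightarrow> nat) \<Rightarrow> (nat \<Rightarrow> 'm \<Rightarrow> nat \<Rightarrow> real) \<Rightarrow> nat \<Rightarrow> real^'m" where
  "ogd_w W mix w1 \<alpha> xs Ps 0 = w1"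
| "ogd_w W mix w1 \<alpha> xs Ps (Suc k) =
     proj (ogd_w W mix w1 \<alpha> xs Ps k
           - \<alpha> *\<^sub>R grad (\<lambda>w. ell (xs (Suc k)) (mix w (Ps (Suc k)))) (ogd_w W mix w1 \<alpha> xs Ps k)) W"

definition mix_ogd_len where
  "mix_ogd_len W mix w1 \<alpha> n xs Ps =
     (\<Sum>k=1..n. ell (xs k) (mix (ogd_w W mix w1 \<alpha> xs Ps (k - 1)) (Ps k)))"

definition mix_len where
  "mix_len n xs Ps w mix = (\<Sum>k=1..n. ell (xs k) (mix w (Ps k)))"

definition mix_len_star where
  "mix_len_star W n xs Ps mix = (INF w\<in>W. mix_len n xs Ps w mix)"

end

theory Submission imports Defs begin

lemma proj_closest:
  fixes W :: "(real^'m) set"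
  shows "proj v W = closest_point W v"
proof -
  have "\<And>w. (w \<in> W \<and> (\<forall>u\<in>W. (norm (v - w))\<^sup>2 \<le> (norm (v - u))\<^sup>2)) = (w \<in> W \<and> (\<forall>y\<in>W. dist v w \<le> dist v y))"
    by (simp add: dist_norm)
  then show ?thesis unfolding proj_def closest_point_def by simp
qed

lemma proj_in: fixes W :: "(real^'m) set"
  assumes "closed W" "W \<noteq> {}" shows "proj v W \<in> W"
  using closest_point_in_set[OF assms] proj_closest by metis

lemma proj_nonexp: fixes W :: "(real^'m) set"
  assumes "closed W" "convex W" "W \<noteq> {}" "u \<in> W"
  shows "norm (proj v W - u) \<le> norm (v - u)"
  using closest_point_lipschitz[OF assms(2,1,3), of v u] closest_point_self[OF assms(4)]
  by (simp add: proj_closest dist_norm)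

lemma grad_rep:
  fixes f :: "real^'m \<Rightarrow> real"
  assumes "(f has_derivative f') (at w)"
  shows "f' = (\<lambda>h. grad f w \<bullet> h)"
proof -
  have lin: "linear f'" using has_derivative_linear[OF assms] .
  define g :: "real^'m" where "g = (\<Sum>i\<in>Basis. f' i *\<^sub>R i)"
  have eq: "f' = (\<lambda>h. g \<bullet> h)"
  proof
    fix h :: "real^'m"
    have "f' h = f' (\<Sum>i\<in>Basis. (h \<bullet> i) *\<^sub>R i)" by (simp add: euclidean_representation)
    also have "\<dots> = (\<Sum>i\<in>Basis. (h \<bullet> i) * f' i)"
      using lin by (simp add: linear_sum linear_scale)
    also have "\<dots> = g \<bullet> h" unfolding g_def by (simp add: inner_sum_right inner_commute mult.commute)
    finally show "f' h = g \<bullet> h" .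
  qed
  have "(THE g. (f has_derivative (\<lambda>h. g \<bullet> h)) (at w)) = g"
  proof (rule the_equality)
    show "(f has_derivative (\<lambda>h. g \<bullet> h)) (at w)" using assms eq by simp
  next
    fix g' assume "(f has_derivative (\<lambda>h. g' \<bullet> h)) (at w)"
    then have "(\<lambda>h. g' \<bullet> h) = (\<lambda>h. g \<bullet> h)"
      using has_derivative_unique assms eq by metis
    then have "g' \<bullet> (g' - g) = g \<bullet> (g' - g)" by metis
    then have "(g' - g) \<bullet> (g' - g) = 0" by (simp add: inner_diff_left)
    then show "g' = g" by simp
  qed
  then show ?thesis using eq unfolding grad_def by simp
qed

lemma convex_tangent:
  fixes f :: "real^'m \<Rightarrow> real"
  assumes cv: "convex_on W f" and w: "w \<in> W" and u: "u \<in> W"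
    and d: "f differentiable (at w)"
  shows "f u \<ge> f w + grad f w \<bullet> (u - w)"
proof -
  obtain f' where fd: "(f has_derivative f') (at w)" using d unfolding differentiable_def by blast
  have f'eq: "f' = (\<lambda>h. grad f w \<bullet> h)" using grad_rep[OF fd] .
  define D where "D = grad f w \<bullet> (u - w)"
  define \<phi> where "\<phi> t = f (w + t *\<^sub>R (u - w))" for t :: real
  have l: "((\<lambda>t::real. w + t *\<^sub>R (u - w)) has_derivative (\<lambda>t. t *\<^sub>R (u - w))) (at 0)"
    by (auto intro!: derivative_eq_intros)
  have fd0: "(f has_derivative f') (at ((\<lambda>t::real. w + t *\<^sub>R (u - w)) 0))" using fd by simp
  have "((f \<circ> (\<lambda>t::real. w + t *\<^sub>R (u - w))) has_derivative (f' \<circ> (\<lambda>t. t *\<^sub>R (u - w)))) (at 0)"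
    using diff_chain_at[OF l fd0] .
  moreover have "(f' \<circ> (\<lambda>t. t *\<^sub>R (u - w))) = (\<lambda>t. t * D)"
    by (auto simp: f'eq D_def o_def)
  ultimately have h: "(\<phi> has_derivative (\<lambda>t. t * D)) (at 0)"
    by (simp add: \<phi>_def[abs_def] o_def)
  have "(\<lambda>t. t * D) = (*) D" by (auto simp: mult.commute)
  with h have "(\<phi> has_derivative (*) D) (at 0)" by simp
  then have "(\<phi> has_field_derivative D) (at 0 within {0<..})"
    unfolding has_field_derivative_def by (rule has_derivative_at_withinI)
  then have lim: "((\<lambda>t. (\<phi> t - \<phi> 0) / (t - 0)) \<longlongrightarrow> D) (at_right 0)"
    unfolding has_field_derivative_iff by simp
  have ev: "eventually (\<lambda>t. (\<phi> t - \<phi> 0) / (t - 0) \<le> f u - f w) (at_right (0::real))"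
    using eventually_at_right_real[OF zero_less_one[where ?'a=real]]
  proof (rule eventually_mono)
    fix t :: real assume t: "t \<in> {0<..<1}"
    have "w + t *\<^sub>R (u - w) = (1 - t) *\<^sub>R w + t *\<^sub>R u" by (simp add: algebra_simps)
    then have "\<phi> t \<le> (1 - t) * f w + t * f u"
      using convex_onD[OF cv, of t w u] t w u by (simp add: \<phi>_def)
    then have "\<phi> t - \<phi> 0 \<le> t * (f u - f w)" by (simp add: \<phi>_def algebra_simps)
    then show "(\<phi> t - \<phi> 0) / (t - 0) \<le> f u - f w" using t by (simp add: divide_simps mult.commute)
  qed
  have "D \<le> f u - f w"
    using tendsto_upperbound[OF lim ev] by simp
  then show ?thesis by (simp add: D_def)
qed


lemma norm_sq_step:
  fixes x g :: "real^'m"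
  shows "(norm (x - c *\<^sub>R g))\<^sup>2 = (norm x)\<^sup>2 - 2 * c * (g \<bullet> x) + c\<^sup>2 * (norm g)\<^sup>2"
  unfolding power2_norm_eq_inner
  by (simp add: inner_diff_left inner_diff_right inner_commute power2_eq_square algebra_simps)

lemma sum_shift1: "(\<Sum>k=1..n. h k) = (\<Sum>j<n. h (Suc j) :: real)"
  by (induction n) auto

theorem proposition1:
  fixes N :: nat and W :: "(real^'m) set"
    and mix :: "real^'m \<Rightarrow> ('m \<Rightarrow> nat \<Rightarrow> real) \<Rightarrow> (nat \<Rightarrow> real)"
    and a b :: real and n :: nat and xs :: "nat \<Rightarrow> nat"
    and Ps :: "nat \<Rightarrow> 'm \<Rightarrow> nat \<Rightarrow> real" and w1 wstar :: "real^'m"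
  assumes "1 < N" and "1 < CARD('m)"
    and "nice_mixture N W mix a"
    and "b > 1"
    and "n \<ge> 1"
    and "\<forall>k\<in>{1..n}. xs k \<in> {1..N}"
    and "\<forall>k\<in>{1..n}. prob_matrix N (Ps k)"
    and "w1 \<in> W"
    and "wstar \<in> W" and "\<forall>w\<in>W. mix_len n xs Ps wstar mix \<le> mix_len n xs Ps w mix"
  shows "mix_ogd_len W mix w1 (2 * (1 - 1 / b) / a) n xs Ps
           \<le> b * mix_len_star W n xs Ps mix + a / 4 * (b\<^sup>2 / (b - 1)) * (norm (w1 - wstar))\<^sup>2"
proof -
  note nm = assms(3)[unfolded nice_mixture_def]
  have Wne: "W \<noteq> {}" and Wcl: "closed W" and Wcv: "convex W" and apos: "a > 0"
    using nm compact_imp_closed by auto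
  define \<alpha> where "\<alpha> = 2 * (1 - 1 / b) / a"
  have bpos: "b > 0" using assms(4) by simp
  have \<alpha>pos: "\<alpha> > 0" using assms(4) apos by (simp add: \<alpha>_def field_simps)
  define v where "v j = ogd_w W mix w1 \<alpha> xs Ps j" for j
  define F where "F k w = ell (xs k) (mix w (Ps k))" for k w
  define u where "u = wstar"
  have vW: "v j \<in> W" for j
    by (induction j) (auto simp: v_def assms(8) proj_in[OF Wcl Wne])
  have step: "2 * \<alpha> * (F (Suc j) (v j) - F (Suc j) u)
      \<le> (norm (v j - u))\<^sup>2 - (norm (v (Suc j) - u))\<^sup>2 + \<alpha>\<^sup>2 * a * F (Suc j) (v j)"
    if j: "j < n" for j
  proof -
    let ?f = "\<lambda>w. ell (xs (Suc j)) (mix w (Ps (Suc j)))"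
    define g where "g = grad ?f (v j)"
    have k: "Suc j \<in> {1..n}" using j by auto
    have props: "convex_on W ?f" "?f differentiable (at (v j))"
       "(norm g)\<^sup>2 \<le> a * ?f (v j)"
      using nm assms(6,7) k vW[of j] unfolding g_def by auto
    have tan: "?f u \<ge> ?f (v j) + g \<bullet> (u - v j)"
      using convex_tangent[OF props(1) vW[of j] _ props(2)] assms(9) unfolding g_def u_def by blast
    have vs: "v (Suc j) = proj (v j - \<alpha> *\<^sub>R g) W" by (simp add: v_def g_def)
    have "norm (v (Suc j) - u) \<le> norm (v j - \<alpha> *\<^sub>R g - u)"
      unfolding vs using proj_nonexp[OF Wcl Wcv Wne] assms(9) u_def by blast
    then have "(norm (v (Suc j) - u))\<^sup>2 \<le> (norm (v j - \<alpha> *\<^sub>R g - u))\<^sup>2"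
      by (simp add: power_mono)
    also have "(norm (v j - \<alpha> *\<^sub>R g - u))\<^sup>2
       = (norm (v j - u))\<^sup>2 - 2 * \<alpha> * (g \<bullet> (v j - u)) + \<alpha>\<^sup>2 * (norm g)\<^sup>2"
      using norm_sq_step[of "v j - u" \<alpha> g] by (simp add: algebra_simps)
    finally have A: "(norm (v (Suc j) - u))\<^sup>2 \<le> (norm (v j - u))\<^sup>2 - 2 * \<alpha> * (g \<bullet> (v j - u)) + \<alpha>\<^sup>2 * (norm g)\<^sup>2" .
    have B: "g \<bullet> (v j - u) \<ge> ?f (v j) - ?f u" using tan
      by (simp add: inner_diff_right)
    have C: "\<alpha>\<^sup>2 * (norm g)\<^sup>2 \<le> \<alpha>\<^sup>2 * (a * ?f (v j))"
      using props(3) by (simp add: mult_left_mono)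
    have D: "2 * \<alpha> * (?f (v j) - ?f u) \<le> 2 * \<alpha> * (g \<bullet> (v j - u))"
      using B \<alpha>pos by simp
    show ?thesis using A C D unfolding F_def by (simp add: algebra_simps)
  qed
  define L where "L = (\<Sum>j<n. F (Suc j) (v j))"
  define Ls where "Ls = (\<Sum>j<n. F (Suc j) u)"
  have "(\<Sum>j<n. 2 * \<alpha> * (F (Suc j) (v j) - F (Suc j) u))
      \<le> (\<Sum>j<n. (norm (v j - u))\<^sup>2 - (norm (v (Suc j) - u))\<^sup>2 + \<alpha>\<^sup>2 * a * F (Suc j) (v j))"
    by (rule sum_mono) (use step in auto)
  also have "\<dots> = (norm (v 0 - u))\<^sup>2 - (norm (v n - u))\<^sup>2 + \<alpha>\<^sup>2 * a * L"
    using sum_lessThan_telescope'[of "\<lambda>j. (norm (v j - u))\<^sup>2" n]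
    by (simp add: sum.distrib L_def sum_distrib_left)
  finally have S: "2 * \<alpha> * (L - Ls) \<le> (norm (w1 - u))\<^sup>2 - (norm (v n - u))\<^sup>2 + \<alpha>\<^sup>2 * a * L"
    by (simp add: L_def Ls_def sum_distrib_left sum_subtractf v_def right_diff_distrib)
  have S2: "(2 * \<alpha> - \<alpha>\<^sup>2 * a) * L \<le> 2 * \<alpha> * Ls + (norm (w1 - u))\<^sup>2"
  proof -
    have "2 * \<alpha> * (L - Ls) \<le> (norm (w1 - u))\<^sup>2 + \<alpha>\<^sup>2 * a * L"
      using S zero_le_power2[of "norm (v n - u)"] by linarith
    then show ?thesis by (simp add: algebra_simps)
  qed
  have coef: "2 * \<alpha> - \<alpha>\<^sup>2 * a = 2 * \<alpha> / b"
    using apos bpos by (simp add: \<alpha>_def power2_eq_square field_simps)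
  have S3: "L \<le> b * Ls + b / (2 * \<alpha>) * (norm (w1 - u))\<^sup>2"
  proof -
    have "2 * \<alpha> / b * L \<le> 2 * \<alpha> * Ls + (norm (w1 - u))\<^sup>2" using S2 coef by simp
    then have "b / (2 * \<alpha>) * (2 * \<alpha> / b * L) \<le> b / (2 * \<alpha>) * (2 * \<alpha> * Ls + (norm (w1 - u))\<^sup>2)"
      using bpos \<alpha>pos by (intro mult_left_mono) auto
    then show ?thesis using bpos \<alpha>pos by (simp add: field_simps)
  qed
  have bc: "b / (2 * \<alpha>) = a / 4 * (b\<^sup>2 / (b - 1))"
    using apos assms(4) by (simp add: \<alpha>_def power2_eq_square field_simps)
  have ogd: "mix_ogd_len W mix w1 \<alpha> n xs Ps = L"
    unfolding mix_ogd_len_def L_def F_def v_def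
    using sum_shift1[of "\<lambda>k. ell (xs k) (mix (ogd_w W mix w1 \<alpha> xs Ps (k - 1)) (Ps k))" n]
    by simp
  have ml: "mix_len n xs Ps w mix = (\<Sum>j<n. F (Suc j) w)" for w
    unfolding mix_len_def F_def
    using sum_shift1[of "\<lambda>k. ell (xs k) (mix w (Ps k))" n] by simp
  have star: "mix_len_star W n xs Ps mix = Ls"
    unfolding mix_len_star_def Ls_def u_def
    by (subst cInf_eq_minimum[where z = "mix_len n xs Ps wstar mix"])
       (use assms(9,10) ml in auto)
  have "mix_ogd_len W mix w1 \<alpha> n xs Ps
           \<le> b * mix_len_star W n xs Ps mix + a / 4 * (b\<^sup>2 / (b - 1)) * (norm (w1 - wstar))\<^sup>2"
    using S3 unfolding ogd star bc u_def .
  then show ?thesis unfolding \<alpha>_def .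
qed

end
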